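(* Let $K\ge1$, $T\ge1$ and $\ell_1,\dots,\ell_T\in[0,1]^K$. The regret of AdaHedge satisfies $\mathcal{R}^{\mathrm{ah}}_T=M^{\mathrm{ah}}_T-L^*_T+\Delta^{\mathrm{ah}}_T\le2\Delta^{\mathrm{ah}}_T$.
   Context: Hedge setting: $K$ experts; in round $t$ the learner chooses a probability vector $w_t$, then $\ell_t$ is revealed and the learner suffers $h_t=\sum_kw_{t,k}\ell_{t,k}$. Write $L_{t,k}=\sum_{s=1}^t\ell_{s,k}$ ($L_{0,k}=0$), $L^*_t=\min_kL_{t,k}$, $H_T=\sum_{t\le T}h_t$, regret $\mathcal{R}_T=H_T-L^*_T$. Exponential weights with learning rate $\eta\in(0,\infty]$ at time $t$: $w_{t,k}=e^{-\eta L_{t-1,k}}/\sum_je^{-\eta L_{t-1,j}}$ if $\eta<\infty$; for $\eta=\infty$, $w_t$ uniform on $\{k:L_{t-1,k}=L^*_{t-1}\}$. With learning rate $\eta_t$ in round $t$: mix loss $m_t=-\frac1{\eta_t}\ln\sum_kw_{t,k}e^{-\eta_t\ell_{t,k}}$ if $\eta_t<\infty$, $m_t=L^*_t-L^*_{t-1}$ if $\eta_t=\infty$; mixability gap $\delta_t=h_t-m_t$; $M_T=\sum_{t\le T}m_t$. AdaHedge: $\Delta^{\mathrm{ah}}_0=0$; in round $t$, $\eta^{\mathrm{ah}}_t=\ln K/\Delta^{\mathrm{ah}}_{t-1}$ ($=\infty$ if $\Delta^{\mathrm{ah}}_{t-1}=0$), weights are exponential weights with learning rate $\eta^{\mathrm{ah}}_t$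 from $L_{t-1}$, and $\Delta^{\mathrm{ah}}_t=\Delta^{\mathrm{ah}}_{t-1}+\delta^{\mathrm{ah}}_t$. Superscript ah denotes quantities for AdaHedge. *)

theory Defs
  imports Complex_Main "HOL-Library.Extended_Real"
begin

text \<open>Experts are indexed by k < K, rounds by t = 1,2,...; the loss of expert k in
round t is l t k. Learning rates live in ereal (value infinity allowed).\<close>

definition cumL :: "(nat \<Rightarrow> nat \<Rightarrow> real) \<Rightarrow> nat \<Rightarrow> nat \<Rightarrow> real" where
  "cumL l t k = (\<Sum>s\<in>{1..t}. l s k)"

definition Lstar :: "nat \<Rightarrow> (nat \<Rightarrow> nat \<Rightarrow> real) \<Rightarrow> nat \<Rightarrow> real" where
  "Lstar K l t = Min ((\<lambda>k. cumL l t k) ` {..<K})"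

definition ew_weight :: "nat \<Rightarrow> (nat \<Rightarrow> nat \<Rightarrow> real) \<Rightarrow> ereal \<Rightarrow> nat \<Rightarrow> nat \<Rightarrow> real" where
  "ew_weight K l eta t k =
     (if k < K then
        (if eta = \<infinity> then
           (let S = {j\<in>{..<K}. cumL l (t - 1) j = Lstar K l (t - 1)} in
              if k \<in> S then 1 / real (card S) else 0)
         else exp (- real_of_ereal eta * cumL l (t - 1) k) /
              (\<Sum>j<K. exp (- real_of_ereal eta * cumL l (t - 1) j)))
      else 0)"

definition hedge_loss :: "nat \<Rightarrow> (nat \<Rightarrow> nat \<Rightarrow> real) \<Rightarrow> ereal \<Rightarrow> nat \<Rightarrow> real" where
  "hedge_loss K l eta t = (\<Sum>k<K. ew_weight K l eta t k * l t k)"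

definition mix_loss :: "nat \<Rightarrow> (nat \<Rightarrow> nat \<Rightarrow> real) \<Rightarrow> ereal \<Rightarrow> nat \<Rightarrow> real" where
  "mix_loss K l eta t =
     (if eta = \<infinity> then Lstar K l t - Lstar K l (t - 1)
      else - (1 / real_of_ereal eta) *
             ln (\<Sum>k<K. ew_weight K l eta t k * exp (- real_of_ereal eta * l t k)))"

definition mix_gap :: "nat \<Rightarrow> (nat \<Rightarrow> nat \<Rightarrow> real) \<Rightarrow> ereal \<Rightarrow> nat \<Rightarrow> real" where
  "mix_gap K l eta t = hedge_loss K l eta t - mix_loss K l eta t"

definition ah_rate :: "nat \<Rightarrow> real \<Rightarrow> ereal" where
  "ah_rate K D = (if D = 0 then \<infinity> else ereal (ln (real K) / D))"

fun ah_Delta :: "nat \<Rightarrow> (nat \<Rightarrow> nat \<Rightarrow> real) \<Rightarrow> nat \<Rightarrow> real" where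
  "ah_Delta K l 0 = 0"
| "ah_Delta K l (Suc t) = ah_Delta K l t + mix_gap K l (ah_rate K (ah_Delta K l t)) (Suc t)"

definition ah_eta :: "nat \<Rightarrow> (nat \<Rightarrow> nat \<Rightarrow> real) \<Rightarrow> nat \<Rightarrow> ereal" where
  "ah_eta K l t = ah_rate K (ah_Delta K l (t - 1))"

definition ah_H :: "nat \<Rightarrow> (nat \<Rightarrow> nat \<Rightarrow> real) \<Rightarrow> nat \<Rightarrow> real" where
  "ah_H K l T = (\<Sum>t\<in>{1..T}. hedge_loss K l (ah_eta K l t) t)"

definition ah_M :: "nat \<Rightarrow> (nat \<Rightarrow> nat \<Rightarrow> real) \<Rightarrow> nat \<Rightarrow> real" where
  "ah_M K l T = (\<Sum>t\<in>{1..T}. mix_loss K l (ah_eta K l t) t)"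

definition ah_regret :: "nat \<Rightarrow> (nat \<Rightarrow> nat \<Rightarrow> real) \<Rightarrow> nat \<Rightarrow> real" where
  "ah_regret K l T = ah_H K l T - Lstar K l T"

end

theory Submission imports Defs "HOL-Analysis.Convex" begin

lemma cumL_0[simp]: "cumL l 0 k = 0" by (simp add: cumL_def)
lemma cumL_Suc[simp]: "cumL l (Suc t) k = cumL l t k + l (Suc t) k"
  by (simp add: cumL_def add.commute)

lemma Lstar_le: "k < K \<Longrightarrow> Lstar K l t \<le> cumL l t k"
  unfolding Lstar_def by (rule Min_le) auto

lemma Lstar_ex: "K \<ge> 1 \<Longrightarrow> \<exists>k<K. cumL l t k = Lstar K l t"
proof -
  assume "K \<ge> 1"
  then have "Lstar K l t \<in> (\<lambda>k. cumL l t k) ` {..<K}" unfolding Lstar_def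
    by (intro Min_in) (auto simp: lessThan_empty_iff)
  then show ?thesis by auto
qed

lemma Lstar_0: "K \<ge> 1 \<Longrightarrow> Lstar K l 0 = 0"
  using Lstar_ex[of K l 0] by auto

definition Z :: "nat \<Rightarrow> (nat \<Rightarrow> nat \<Rightarrow> real) \<Rightarrow> real \<Rightarrow> nat \<Rightarrow> real" where
  "Z K l e t = (\<Sum>k<K. exp (- e * cumL l t k))"

definition Phi0 :: "nat \<Rightarrow> (nat \<Rightarrow> nat \<Rightarrow> real) \<Rightarrow> real \<Rightarrow> nat \<Rightarrow> real" where
  "Phi0 K l e t = - (1 / e) * ln (Z K l e t / real K)"

lemma Z_pos: "K \<ge> 1 \<Longrightarrow> Z K l e t > 0"
  unfolding Z_def by (intro sum_pos) (auto simp: lessThan_empty_iff)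

lemma mix_fin:
  assumes K: "K \<ge> 1" and e: "e > 0" and t: "t \<ge> 1"
  shows "mix_loss K l (ereal e) t = Phi0 K l e t - Phi0 K l e (t - 1)"
proof -
  obtain s where s: "t = Suc s" using t by (cases t) auto
  have "(\<Sum>k<K. ew_weight K l (ereal e) t k * exp (- e * l t k))
        = (\<Sum>k<K. exp (- e * cumL l t k) / Z K l e s)"
    by (intro sum.cong) (auto simp: ew_weight_def s Z_def algebra_simps
        simp flip: exp_add)
  also have "\<dots> = Z K l e t / Z K l e s" by (simp add: Z_def sum_divide_distrib)
  finally have eq: "(\<Sum>k<K. ew_weight K l (ereal e) t k * exp (- e * l t k)) = Z K l e t / Z K l e s" .
  have p1: "Z K l e t > 0" "Z K l e s > 0" "real K > 0" using Z_pos K by auto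
  have "ln (Z K l e t / Z K l e s) = ln (Z K l e t / real K) - ln (Z K l e s / real K)"
    using p1 by (simp add: ln_div)
  then show ?thesis unfolding mix_loss_def Phi0_def real_of_ereal.simps eq using s
    by (simp add: diff_divide_distrib)
qed

lemma Phi0_0: "K \<ge> 1 \<Longrightarrow> Phi0 K l e 0 = 0"
  by (simp add: Phi0_def Z_def)

lemma Phi0_lower:
  assumes K: "K \<ge> 1" and e: "e > 0"
  shows "Lstar K l t \<le> Phi0 K l e t"
proof -
  have "Z K l e t \<le> (\<Sum>k<K. exp (- e * Lstar K l t))" unfolding Z_def
    using Lstar_le e by (intro sum_mono) (auto intro: mult_left_mono)
  then have "Z K l e t / real K \<le> exp (- e * Lstar K l t)" using K by (simp add: field_simps)
  then have "ln (Z K l e t / real K) \<le> ln (exp (- e * Lstar K l t))"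
    using Z_pos[OF K] K by (subst ln_le_cancel_iff) auto
  then have "ln (Z K l e t / real K) \<le> - e * Lstar K l t" by simp
  then show ?thesis using e unfolding Phi0_def by (simp add: field_simps)
qed

lemma Phi0_upper:
  assumes K: "K \<ge> 1" and e: "e > 0"
  shows "Phi0 K l e t \<le> Lstar K l t + ln (real K) / e"
proof -
  obtain j where j: "j < K" "cumL l t j = Lstar K l t" using Lstar_ex[OF K] by blast
  have "exp (- e * cumL l t j) \<le> Z K l e t" unfolding Z_def using j
    by (intro member_le_sum) auto
  then have "exp (- e * Lstar K l t) \<le> Z K l e t" using j by simp
  then have "- e * Lstar K l t \<le> ln (Z K l e t)"
    using Z_pos[OF K] by (subst ln_exp[symmetric]) (simp only: ln_le_cancel_iff exp_gt_zero)
  moreover have "ln (Z K l e t / real K) = ln (Z K l e t) - ln (real K)"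
  proof -
    have "Z K l e t > 0" "real K > 0" using Z_pos[OF K] K by auto
    then show ?thesis by (simp add: ln_div)
  qed
  ultimately show ?thesis using e unfolding Phi0_def by (simp add: field_simps)
qed

lemma Phi0_mono:
  assumes K: "K \<ge> 1" and e: "0 < e'" "e' \<le> e"
  shows "Phi0 K l e t \<le> Phi0 K l e' t"
proof -
  define p where "p = e / e'"
  have p: "p \<ge> 1" using e by (simp add: p_def)
  define x where "x k = exp (- e' * cumL l t k)" for k
  have xp: "exp (- (e' * cumL l t k)) powr p = exp (- (e * cumL l t k))" for k
    using e by (simp add: x_def powr_def p_def field_simps)
  have "(\<Sum>k<K. (1 / real K) *\<^sub>R x k) powr p \<le> (\<Sum>k<K. (1 / real K) * x k powr p)"
    using K by (intro convex_on_sum[OF _ _ powr_convex[OF p]]) (auto simp: x_def lessThan_empty_iff)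
  then have "(Z K l e' t / real K) powr p \<le> Z K l e t / real K"
    by (simp add: Z_def xp x_def sum_divide_distrib flip: sum_distrib_left)
  moreover have zz: "Z K l e' t > 0" "Z K l e t > 0" using Z_pos[OF K] by auto
  ultimately have "ln ((Z K l e' t / real K) powr p) \<le> ln (Z K l e t / real K)"
    using K by (subst ln_le_cancel_iff) auto
  then have "p * ln (Z K l e' t / real K) \<le> ln (Z K l e t / real K)"
    using zz K by (simp add: ln_powr)
  then have "(1/e) * (p * ln (Z K l e' t / real K)) \<le> (1/e) * ln (Z K l e t / real K)"
    using e by (intro mult_left_mono) auto
  then show ?thesis using e unfolding Phi0_def p_def by (simp add: field_simps)
qed


lemma w_fin_sum: "K \<ge> 1 \<Longrightarrow> (\<Sum>k<K. ew_weight K l (ereal e) t k) = 1"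
proof -
  assume K: "K \<ge> 1"
  have z: "(\<Sum>j<K. exp (- e * cumL l (t-1) j)) > 0" using Z_pos[OF K, of l e "t-1"] by (simp add: Z_def)
  have "(\<Sum>k<K. ew_weight K l (ereal e) t k) = (\<Sum>k<K. exp (- e * cumL l (t-1) k) / (\<Sum>j<K. exp (- e * cumL l (t-1) j)))"
    by (intro sum.cong) (auto simp: ew_weight_def)
  also have "\<dots> = 1" using z by (simp add: sum_divide_distrib[symmetric])
  finally show ?thesis .
qed

lemma w_fin_nonneg: "K \<ge> 1 \<Longrightarrow> ew_weight K l (ereal e) t k \<ge> 0"
  using Z_pos[of K l e "t-1"] by (simp add: ew_weight_def Z_def)

lemma gap_fin:
  assumes K: "K \<ge> 1" and e: "e > 0"
  shows "mix_gap K l (ereal e) t \<ge> 0"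
proof -
  define w where "w k = ew_weight K l (ereal e) t k" for k
  define h where "h = (\<Sum>k<K. w k * l t k)"
  have ws: "(\<Sum>k<K. w k) = 1" using w_fin_sum[OF K] by (simp add: w_def)
  have wn: "w k \<ge> 0" for k using w_fin_nonneg[OF K] by (simp add: w_def)
  have step: "w k * exp (- e * l t k) \<ge> w k * (exp (- e * h) * (1 + (e * h - e * l t k)))" for k
  proof -
    have "exp (- e * l t k) = exp (- e * h) * exp (e * h - e * l t k)"
      by (simp flip: exp_add)
    also have "\<dots> \<ge> exp (- e * h) * (1 + (e * h - e * l t k))"
      by (intro mult_left_mono) auto
    finally show ?thesis using wn by (intro mult_left_mono) auto
  qed
  have "(\<Sum>k<K. w k * (exp (- e * h) * (1 + (e * h - e * l t k))))
        = exp (- e * h) * ((\<Sum>k<K. w k) + e * h * (\<Sum>k<K. w k) - e * (\<Sum>k<K. w k * l t k))"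
    by (simp add: algebra_simps sum.distrib sum_distrib_left sum_distrib_right sum_subtractf)
  also have "\<dots> = exp (- e * h)" using ws by (simp add: h_def)
  finally have "exp (- e * h) \<le> (\<Sum>k<K. w k * exp (- e * l t k))"
    using step by (metis (no_types, lifting) sum_mono)
  then have "ln (exp (- e * h)) \<le> ln (\<Sum>k<K. w k * exp (- e * l t k))"
    by (subst ln_le_cancel_iff) (auto intro: less_le_trans[OF exp_gt_zero])
  then have "- e * h \<le> ln (\<Sum>k<K. w k * exp (- e * l t k))" by simp
  then have "- (1/e) * ln (\<Sum>k<K. w k * exp (- e * l t k)) \<le> h"
    using e by (simp add: field_simps)
  then show ?thesis unfolding mix_gap_def hedge_loss_def mix_loss_def
    by (simp add: w_def h_def)
qed

lemma gap_inf:
  assumes K: "K \<ge> 1" and t: "t \<ge> 1"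
  shows "mix_gap K l \<infinity> t \<ge> 0"
proof -
  obtain s where s: "t = Suc s" using t by (cases t) auto
  define S where "S = {j\<in>{..<K}. cumL l s j = Lstar K l s}"
  have fS: "finite S" and neS: "S \<noteq> {}" using Lstar_ex[OF K, of l s] by (auto simp: S_def)
  have cS: "real (card S) > 0" using fS neS by (simp add: card_gt_0_iff)
  have "hedge_loss K l \<infinity> t = (\<Sum>k<K. (if k \<in> S then 1 / real (card S) else 0) * l t k)"
    unfolding hedge_loss_def by (intro sum.cong) (auto simp: ew_weight_def s S_def Let_def)
  also have "\<dots> = (\<Sum>k\<in>S. l t k / real (card S))"
  proof -
    have "(\<Sum>k<K. (if k \<in> S then 1 / real (card S) else 0) * l t k)
       = (\<Sum>k<K. (if k \<in> S then l t k / real (card S) else 0))" by (intro sum.cong) auto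
    also have "\<dots> = (\<Sum>k\<in>{..<K} \<inter> S. l t k / real (card S))"
      by (simp add: sum.inter_restrict)
    also have "{..<K} \<inter> S = S" by (auto simp: S_def)
    finally show ?thesis .
  qed
  also have "\<dots> \<ge> (\<Sum>k\<in>S. (Lstar K l t - Lstar K l s) / real (card S))"
  proof (intro sum_mono divide_right_mono)
    fix k assume k: "k \<in> S"
    then have "Lstar K l t \<le> cumL l s k + l t k" using Lstar_le[of k K l t] by (auto simp: S_def s)
    then show "Lstar K l t - Lstar K l s \<le> l t k" using k by (auto simp: S_def)
  qed simp
  also have "(\<Sum>k\<in>S. (Lstar K l t - Lstar K l s) / real (card S)) = Lstar K l t - Lstar K l s"
    using cS by simp
  finally show ?thesis unfolding mix_gap_def mix_loss_def using s by simp
qed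

lemma gap_inf1:
  assumes t: "t \<ge> 1"
  shows "mix_gap 1 l \<infinity> t = 0"
proof -
  obtain s where s: "t = Suc s" using t by (cases t) auto
  have LS: "Lstar 1 l u = cumL l u 0" for u by (simp add: Lstar_def lessThan_Suc)
  have LS': "Lstar (Suc 0) l u = cumL l u 0" for u using LS by simp
  have S: "{j\<in>{..<1}. cumL l s j = Lstar 1 l s} = {0}" by (auto simp: LS LS')
  have "hedge_loss 1 l \<infinity> t = l t 0"
    by (simp only: hedge_loss_def ew_weight_def Let_def s diff_Suc_1 S) simp
  then show ?thesis unfolding mix_gap_def mix_loss_def using s by (simp add: LS LS')
qed


lemma delta_props:
  assumes K: "K \<ge> 1"
  shows "0 \<le> ah_Delta K l n \<and> (K = 1 \<longrightarrow> ah_Delta K l n = 0)"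
proof (induction n)
  case 0 then show ?case by simp
next
  case (Suc n)
  show ?case
  proof (cases "ah_Delta K l n = 0")
    case True
    then have r: "ah_rate K (ah_Delta K l n) = \<infinity>" by (simp add: ah_rate_def)
    have eq: "ah_Delta K l (Suc n) = mix_gap K l \<infinity> (Suc n)" using True r by simp
    have "mix_gap K l \<infinity> (Suc n) \<ge> 0" using gap_inf[OF K] by simp
    moreover have "K = 1 \<longrightarrow> mix_gap K l \<infinity> (Suc n) = 0" using gap_inf1[of "Suc n" l] by auto
    ultimately show ?thesis unfolding eq by blast
  next
    case False
    have D: "ah_Delta K l n > 0" using Suc.IH False by auto
    have "K \<noteq> 1" using Suc.IH False by blast
    then have "K \<ge> 2" using K by linarith
    then have "ln (real K) > 0" by simp
    then have e: "ln (real K) / ah_Delta K l n > 0" using D by simp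
    have "ah_rate K (ah_Delta K l n) = ereal (ln (real K) / ah_Delta K l n)"
      using False by (simp add: ah_rate_def)
    then show ?thesis using gap_fin[OF K e, of l "Suc n"] D \<open>K \<noteq> 1\<close> by simp
  qed
qed

definition valid :: "ereal \<Rightarrow> bool" where
  "valid eta \<longleftrightarrow> eta = \<infinity> \<or> (\<exists>e>0. eta = ereal e)"

lemma rate_cases:
  assumes K: "K \<ge> 1"
  shows "ah_rate K (ah_Delta K l n) = \<infinity> \<and> ah_Delta K l n = 0
    \<or> (ah_Delta K l n > 0 \<and> K \<ge> 2 \<and> ah_rate K (ah_Delta K l n) = ereal (ln (real K) / ah_Delta K l n))"
proof (cases "ah_Delta K l n = 0")
  case True then show ?thesis by (simp add: ah_rate_def)
next
  case False
  have "K \<noteq> 1" using delta_props[OF K, of l n] False by blast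
  then have "K \<ge> 2" using K by linarith
  then show ?thesis using False delta_props[OF K, of l n] by (simp add: ah_rate_def)
qed

lemma rate_valid:
  assumes K: "K \<ge> 1"
  shows "valid (ah_rate K (ah_Delta K l n))"
  using rate_cases[OF K, of l n] unfolding valid_def
  by (auto intro!: divide_pos_pos)

lemma rate_mono:
  assumes K: "K \<ge> 1"
  shows "ah_rate K (ah_Delta K l (Suc n)) \<le> ah_rate K (ah_Delta K l n)"
proof -
  have g: "ah_Delta K l (Suc n) \<ge> ah_Delta K l n"
    using rate_cases[OF K, of l n] gap_inf[OF K, where t="Suc n" and l=l] gap_fin[OF K, where l=l and t="Suc n"]
    by (auto intro!: divide_pos_pos)
  show ?thesis using rate_cases[OF K, of l n] rate_cases[OF K, of l "Suc n"] g
    by (auto intro!: divide_left_mono)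
qed

definition Phi :: "nat \<Rightarrow> (nat \<Rightarrow> nat \<Rightarrow> real) \<Rightarrow> ereal \<Rightarrow> nat \<Rightarrow> real" where
  "Phi K l eta t = (if eta = \<infinity> then Lstar K l t else Phi0 K l (real_of_ereal eta) t)"

lemma mix_Phi:
  assumes K: "K \<ge> 1" and v: "valid eta" and t: "t \<ge> 1"
  shows "mix_loss K l eta t = Phi K l eta t - Phi K l eta (t - 1)"
  using v mix_fin[OF K _ t] unfolding valid_def Phi_def by (auto simp: mix_loss_def)

lemma Phi_anti:
  assumes K: "K \<ge> 1" and v: "valid eta" "valid eta'" and le: "eta' \<le> eta"
  shows "Phi K l eta t \<le> Phi K l eta' t"
  using v le Phi0_lower[OF K] Phi0_mono[OF K] unfolding valid_def Phi_def by auto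

lemma telescope:
  assumes K: "K \<ge> 1"
  shows "(\<Sum>t\<in>{1..n}. mix_loss K l (ah_eta K l t) t) \<le> Phi K l (ah_rate K (ah_Delta K l n)) n"
proof (induction n)
  case 0 then show ?case by (simp add: Phi_def ah_rate_def Lstar_0[OF K])
next
  case (Suc n)
  let ?r = "\<lambda>n. ah_rate K (ah_Delta K l n)"
  have "(\<Sum>t\<in>{1..Suc n}. mix_loss K l (ah_eta K l t) t)
      = (\<Sum>t\<in>{1..n}. mix_loss K l (ah_eta K l t) t) + mix_loss K l (?r n) (Suc n)"
    by (simp add: ah_eta_def)
  also have "\<dots> \<le> Phi K l (?r n) n + (Phi K l (?r n) (Suc n) - Phi K l (?r n) n)"
    using Suc.IH mix_Phi[OF K rate_valid[OF K, where l=l and n=n], where t="Suc n"] by simp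
  also have "\<dots> = Phi K l (?r n) (Suc n)" by simp
  also have "\<dots> \<le> Phi K l (?r (Suc n)) (Suc n)"
    by (intro Phi_anti[OF K rate_valid[OF K] rate_valid[OF K] rate_mono[OF K]])
  finally show ?case .
qed

lemma gap_sum: "(\<Sum>t\<in>{1..n}. mix_gap K l (ah_eta K l t) t) = ah_Delta K l n"
  by (induction n) (auto simp: ah_eta_def)

theorem lemma3:
  fixes K T :: nat and l :: "nat \<Rightarrow> nat \<Rightarrow> real"
  assumes "K \<ge> 1" and "T \<ge> 1"
    and "\<And>t k. t \<in> {1..T} \<Longrightarrow> k < K \<Longrightarrow> 0 \<le> l t k \<and> l t k \<le> 1"
  shows "ah_regret K l T = ah_M K l T - Lstar K l T + ah_Delta K l T
         \<and> ah_regret K l T \<le> 2 * ah_Delta K l T"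
proof -
  note K = assms(1)
  have H: "ah_H K l T = ah_M K l T + ah_Delta K l T"
    unfolding ah_H_def ah_M_def gap_sum[symmetric, of K l T]
    by (simp add: mix_gap_def sum.distrib[symmetric])
  have "Phi K l (ah_rate K (ah_Delta K l T)) T \<le> Lstar K l T + ah_Delta K l T"
  proof (cases "ah_Delta K l T = 0")
    case True
    then show ?thesis by (simp add: Phi_def ah_rate_def)
  next
    case False
    then have D: "ah_Delta K l T > 0" "K \<ge> 2"
      and r: "ah_rate K (ah_Delta K l T) = ereal (ln (real K) / ah_Delta K l T)"
      using rate_cases[OF K, of l T] by auto
    have lk: "ln (real K) > 0" using D by simp
    have "Phi0 K l (ln (real K) / ah_Delta K l T) T \<le> Lstar K l T + ln (real K) / (ln (real K) / ah_Delta K l T)"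
      using Phi0_upper[OF K, where e="ln (real K) / ah_Delta K l T" and l=l and t=T] lk D by simp
    then show ?thesis using r lk by (simp add: Phi_def)
  qed
  then have "ah_M K l T \<le> Lstar K l T + ah_Delta K l T"
    using telescope[OF K, of l T] unfolding ah_M_def by simp
  then show ?thesis using H unfolding ah_regret_def by simp
qed

end
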